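(* Let $A=(a,ha-d,ha+d)$ with $d,h\in\mathbb{P}$, $\gcd(a,d)=1$, $ha-d>1$, and let $s=\lfloor\frac{ha-d}{2h}\rfloor$. Then \begin{align*} g(A)&=\max\Big\{\Big\lfloor\tfrac{ha-d}{2h}\Big\rfloor(ha+d)-a,\ \Big(a-\Big\lceil\tfrac{ha-d}{2h}\Big\rceil\Big)(ha-d)-a\Big\},\\ n(A)&=\tfrac{ha+d}{2a}s(s+1)+\tfrac{ha-d}{2a}(a-s)(a-s-1)-\tfrac{a-1}{2},\\ s(A)&=\Big(\tfrac{(ha+d)^2(2s+1)}{12a}-\tfrac{ha+d}{4}\Big)s(s+1)+\Big(\tfrac{(ha-d)^2(2a-2s-1)}{12a}-\tfrac{ha-d}{4}\Big)(a-s)(a-s-1)+\tfrac{a^2-1}{12}, \end{align*} and for every positive integer $\mu$, $$s_\mu(A)=\frac{1}{\mu+1}\sum_{\kappa=0}^{\mu}\binom{\mu+1}{\kappa}\mathcal{B}_\kappa a^{\kappa-1}\Big((ha+d)^{\mu+1-\kappa}\sum_{r=0}^{s}r^{\mu+1-\kappa}+(ha-d)^{\mu+1-\kappa}\sum_{r=1}^{a-s-1}r^{\mu+1-\kappa}\Big)+\frac{\mathcal{B}_{\mu+1}}{\mu+1}(a^{\mu+1}-1).$$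
   Context: For a tuple $A$ of positive integers with $\gcd(A)=1$, $\mathcal{NR}(A)$ is the finite set of nonnegative integers that cannot be written as a nonnegative integer combination of the entries of $A$; $g(A)=\max\mathcal{NR}(A)$, $n(A)=|\mathcal{NR}(A)|$, $s(A)=\sum_{n\in\mathcal{NR}(A)}n$, and $s_\mu(A)=\sum_{n\in\mathcal{NR}(A)}n^\mu$. $\mathcal{B}_\kappa$ are the Bernoulli numbers, with the convention $\mathcal{B}_0=1$, $\mathcal{B}_1=-\frac12$, $\mathcal{B}_2=\frac16$ (i.e. $\frac{t}{e^t-1}=\sum_{n\ge0}\mathcal{B}_n\frac{t^n}{n!}$). $\mathbb{P}=\{1,2,\dots\}$. *)

theory Defs
  imports Complex_Main
begin

definition representable :: "nat list \<Rightarrow> nat \<Rightarrow> bool" where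
  "representable A n \<longleftrightarrow>
     (\<exists>c :: nat list. length c = length A \<and> n = (\<Sum>i<length A. c ! i * A ! i))"

definition NR :: "nat list \<Rightarrow> nat set" where
  "NR A = {n. \<not> representable A n}"

definition frob :: "nat list \<Rightarrow> int" where
  "frob A = (if NR A = {} then -1 else int (Max (NR A)))"

definition sylv :: "nat list \<Rightarrow> nat" where
  "sylv A = card (NR A)"

definition sumNR :: "nat list \<Rightarrow> nat" where
  "sumNR A = (\<Sum>n\<in>NR A. n)"

definition powsumNR :: "nat \<Rightarrow> nat list \<Rightarrow> nat" where
  "powsumNR \<mu> A = (\<Sum>n\<in>NR A. n ^ \<mu>)"

text \<open>Bernoulli numbers with B_1 = -1/2, via the standard recursion
  sum_{k=0}^{n} C(n+1,k) B_k = 0 for n \<ge> 1, equivalent to t/(e^t-1) = sum B_n t^n/n!.\<close>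
fun bernoulli :: "nat \<Rightarrow> real" where
  "bernoulli n = (if n = 0 then 1 else
      - (\<Sum>k<n. real (Suc n choose k) * (if k < n then bernoulli k else 0)) / real (Suc n))"

end

theory Submission
  imports Defs
begin


declare bernoulli.simps [simp del]

lemma bernoulli_0 [simp]: "bernoulli 0 = 1"
  by (subst bernoulli.simps) simp

lemma bernoulli_Suc: "bernoulli (Suc n) =
   - (\<Sum>k<Suc n. real (Suc (Suc n) choose k) * bernoulli k) / real (Suc (Suc n))"
proof -
  have "(\<Sum>k<Suc n. real (Suc (Suc n) choose k) * (if k < Suc n then bernoulli k else 0))
      = (\<Sum>k<Suc n. real (Suc (Suc n) choose k) * bernoulli k)"
    by (rule sum.cong) auto
  then show ?thesis by (subst bernoulli.simps) simp
qed

lemma bern_sum: "(\<Sum>k<M. real (M choose k) * bernoulli k) = (if M = 1 then 1 else 0)"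
proof (cases M)
  case 0 then show ?thesis by simp
next
  case (Suc n)
  show ?thesis
  proof (cases n)
    case 0 then show ?thesis using Suc by simp
  next
    case (Suc n')
    have "(\<Sum>k<M. real (M choose k) * bernoulli k)
        = (\<Sum>k<Suc n'. real (Suc (Suc n') choose k) * bernoulli k)
          + real (Suc (Suc n')) * bernoulli (Suc n')"
      using \<open>M = Suc n\<close> Suc by simp
    also have "\<dots> = 0" by (simp add: bernoulli_Suc)
    finally show ?thesis using \<open>M = Suc n\<close> Suc by simp
  qed
qed

lemma bernoulli_1: "bernoulli 1 = - 1/2"
  by (simp add: bernoulli_Suc[of 0])

lemma bernoulli_2: "bernoulli 2 = 1/6"
proof -
  have b1: "bernoulli (Suc 0) = -1/2" using bernoulli_1 by simp
  have "bernoulli (Suc (Suc 0)) = 1/6"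
    by (subst bernoulli_Suc) (simp add: lessThan_Suc b1)
  then show ?thesis by (simp add: numeral_2_eq_2)
qed

definition bpoly :: "nat \<Rightarrow> real \<Rightarrow> real" where
  "bpoly n y = (\<Sum>k\<le>n. real (n choose k) * bernoulli k * y ^ (n - k))"

lemma sum_if_le:
  fixes f :: "nat \<Rightarrow> real"
  shows "(\<Sum>m\<le>n. if k \<le> m then f m else 0) = (\<Sum>m=k..n. f m)"
proof -
  have "(\<Sum>m\<le>n. if k \<le> m then f m else 0) = sum f ({..n} \<inter> {m. k \<le> m})"
    by (subst sum.inter_restrict) auto
  also have "{..n} \<inter> {m. k \<le> m} = {k..n}" by auto
  finally show ?thesis .
qed

lemma bpoly_add: "bpoly n (y + c) = (\<Sum>m\<le>n. real (n choose m) * y ^ (n - m) * bpoly m c)"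
proof -
  have "bpoly n (y + c) = (\<Sum>k\<le>n. real (n choose k) * bernoulli k *
          (\<Sum>i\<le>n-k. real (n - k choose i) * c ^ i * y ^ (n - k - i)))"
    unfolding bpoly_def
  proof (rule sum.cong[OF refl])
    fix k
    have "(y + c) ^ (n - k) = (c + y) ^ (n - k)" by (simp add: add.commute)
    then show "real (n choose k) * bernoulli k * (y + c) ^ (n - k) =
          real (n choose k) * bernoulli k *
          (\<Sum>i\<le>n-k. real (n - k choose i) * c ^ i * y ^ (n - k - i))"
      by (simp only: binomial_ring)
  qed
  also have "\<dots> = (\<Sum>k\<le>n. \<Sum>m=k..n. real (n choose k) * bernoulli k *
          (real (n - k choose (m - k)) * c ^ (m - k) * y ^ (n - m)))"
  proof (rule sum.cong[OF refl])
    fix k assume k: "k \<in> {..n}"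
    have eq: "{0+k..(n-k)+k} = {k..n}" using k by auto
    have "(\<Sum>i\<le>n-k. real (n - k choose i) * c ^ i * y ^ (n - k - i))
        = (\<Sum>i=0..n-k. (\<lambda>m. real (n - k choose (m - k)) * c ^ (m - k) * y ^ (n - m)) (i+k))"
      unfolding atLeast0AtMost
    proof (rule sum.cong[OF refl])
      fix i assume "i \<in> {..n-k}"
      have "n - (i + k) = n - k - i" by simp
      then show "real (n - k choose i) * c ^ i * y ^ (n - k - i) =
         (\<lambda>m. real (n - k choose (m - k)) * c ^ (m - k) * y ^ (n - m)) (i+k)"
        by (simp only: add_diff_cancel_right')
    qed
    also have "\<dots> = (\<Sum>m=k..n. real (n - k choose (m - k)) * c ^ (m - k) * y ^ (n - m))"
      using sum.shift_bounds_cl_nat_ivl[of "\<lambda>m. real (n - k choose (m - k)) * c ^ (m - k) * y ^ (n - m)" 0 k "n-k"] eq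
      by simp
    finally have "(\<Sum>i\<le>n-k. real (n - k choose i) * c ^ i * y ^ (n - k - i))
        = (\<Sum>m=k..n. real (n - k choose (m - k)) * c ^ (m - k) * y ^ (n - m))" .
    then show "real (n choose k) * bernoulli k *
          (\<Sum>i\<le>n-k. real (n - k choose i) * c ^ i * y ^ (n - k - i)) =
          (\<Sum>m=k..n. real (n choose k) * bernoulli k *
          (real (n - k choose (m - k)) * c ^ (m - k) * y ^ (n - m)))"
      by (simp add: sum_distrib_left)
  qed
  also have "\<dots> = (\<Sum>k\<le>n. \<Sum>m\<le>n. if k \<le> m then real (n choose m) * y ^ (n - m) *
          (real (m choose k) * bernoulli k * c ^ (m - k)) else 0)"
  proof (rule sum.cong[OF refl])
    fix k assume k: "k \<in> {..n}"
    show "(\<Sum>m=k..n. real (n choose k) * bernoulli k *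
          (real (n - k choose (m - k)) * c ^ (m - k) * y ^ (n - m))) =
          (\<Sum>m\<le>n. if k \<le> m then real (n choose m) * y ^ (n - m) *
          (real (m choose k) * bernoulli k * c ^ (m - k)) else 0)"
      unfolding sum_if_le
    proof (rule sum.cong[OF refl])
      fix m assume m: "m \<in> {k..n}"
      have h: "real (n choose m) * real (m choose k) = real (n choose k) * real (n - k choose (m - k))"
        using choose_mult[of k m n] m by (metis atLeastAtMost_iff of_nat_mult)
      have "real (n choose k) * bernoulli k *
          (real (n - k choose (m - k)) * c ^ (m - k) * y ^ (n - m)) =
          (real (n choose k) * real (n - k choose (m - k))) * (bernoulli k * c ^ (m - k) * y ^ (n - m))"
        by (simp only: mult_ac)
      also have "\<dots> = (real (n choose m) * real (m choose k)) * (bernoulli k * c ^ (m - k) * y ^ (n - m))"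
        by (simp only: h)
      also have "\<dots> = real (n choose m) * y ^ (n - m) * (real (m choose k) * bernoulli k * c ^ (m - k))"
        by (simp only: mult_ac)
      finally show "real (n choose k) * bernoulli k *
          (real (n - k choose (m - k)) * c ^ (m - k) * y ^ (n - m)) =
          real (n choose m) * y ^ (n - m) * (real (m choose k) * bernoulli k * c ^ (m - k))" .
    qed
  qed
  also have "\<dots> = (\<Sum>m\<le>n. \<Sum>k\<le>n. if k \<le> m then real (n choose m) * y ^ (n - m) *
          (real (m choose k) * bernoulli k * c ^ (m - k)) else 0)"
    by (rule sum.swap)
  also have "\<dots> = (\<Sum>m\<le>n. real (n choose m) * y ^ (n - m) * bpoly m c)"
  proof (rule sum.cong[OF refl])
    fix m assume m: "m \<in> {..n}"
    have "(\<Sum>k\<le>n. if k \<le> m then real (n choose m) * y ^ (n - m) *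
          (real (m choose k) * bernoulli k * c ^ (m - k)) else 0)
        = sum (\<lambda>k. real (n choose m) * y ^ (n - m) *
          (real (m choose k) * bernoulli k * c ^ (m - k))) ({..n} \<inter> {..m})"
      by (subst sum.inter_restrict) auto
    also have "{..n} \<inter> {..m} = {..m}" using m by auto
    finally show "(\<Sum>k\<le>n. if k \<le> m then real (n choose m) * y ^ (n - m) *
          (real (m choose k) * bernoulli k * c ^ (m - k)) else 0)
        = real (n choose m) * y ^ (n - m) * bpoly m c"
      by (simp add: bpoly_def sum_distrib_left)
  qed
  finally show ?thesis .
qed

lemma bpoly_0: "bpoly m 0 = bernoulli m"
proof -
  have "bpoly m 0 = (\<Sum>k\<le>m. if k = m then bernoulli k else 0)"
    unfolding bpoly_def by (rule sum.cong) auto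
  then show ?thesis by simp
qed

lemma bpoly_1: "bpoly m 1 = bernoulli m + (if m = 1 then 1 else 0)"
proof -
  have "bpoly m 1 = (\<Sum>k<Suc m. real (m choose k) * bernoulli k)"
    unfolding bpoly_def lessThan_Suc_atMost by simp
  also have "\<dots> = (\<Sum>k<m. real (m choose k) * bernoulli k) + bernoulli m" by simp
  finally show ?thesis using bern_sum[of m] by simp
qed

lemma bpoly_diff: "bpoly n (y + 1) - bpoly n y = real n * y ^ (n - 1)"
proof -
  have "bpoly n (y + 1) - bpoly n (y + 0) =
     (\<Sum>m\<le>n. real (n choose m) * y ^ (n - m) * (bpoly m 1 - bpoly m 0))"
    unfolding bpoly_add by (simp add: sum_subtractf algebra_simps)
  also have "\<dots> = (\<Sum>m\<le>n. if m = 1 then real (n choose m) * y ^ (n - m) else 0)"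
    by (rule sum.cong) (auto simp: bpoly_0 bpoly_1)
  also have "\<dots> = real n * y ^ (n - 1)"
    by (cases n) auto
  finally show ?thesis by simp
qed


lemma raabe_aux:
  fixes a :: nat
  assumes a: "a > 0"
  defines "R \<equiv> (\<lambda>m. real a ^ m * (\<Sum>r<a. bpoly m (real r / real a)) - real a * bernoulli m)"
  shows "(\<Sum>m<n. real (n choose m) * R m) = 0"
proof -
  define A where "A = real a"
  have A: "A > 0" using a by (simp add: A_def)
  define X where "X = A ^ n * (\<Sum>r<a. bpoly n (real (Suc r) / A)) - A * bpoly n 1"
  have tel: "(\<Sum>r<a. bpoly n (real (Suc r) / A) - bpoly n (real r / A)) = bpoly n 1 - bpoly n 0"
    using sum_lessThan_telescope[of "\<lambda>r. bpoly n (real r / A)" a] A by (simp add: A_def)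
  have d10: "bpoly n 1 - bpoly n 0 = (if n = 1 then 1 else 0)"
    by (simp add: bpoly_0 bpoly_1)
  have "X - (A ^ n * (\<Sum>r<a. bpoly n (real r / A)) - A * bpoly n 0)
      = A ^ n * (\<Sum>r<a. bpoly n (real (Suc r) / A) - bpoly n (real r / A)) - A * (bpoly n 1 - bpoly n 0)"
    unfolding X_def by (simp add: sum_subtractf algebra_simps)
  also have "\<dots> = 0" unfolding tel d10 by simp
  finally have X1: "X = R n" unfolding R_def A_def by (simp add: bpoly_0)
  have "X = (\<Sum>m\<le>n. real (n choose m) * R m)"
  proof -
    have e1: "bpoly n (real (Suc r) / A) = (\<Sum>m\<le>n. real (n choose m) * (1 / A) ^ (n - m) * bpoly m (real r / A))" for r
      using bpoly_add[of n "1 / A" "real r / A"] by (simp add: add_divide_distrib)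
    have e2: "bpoly n 1 = (\<Sum>m\<le>n. real (n choose m) * bernoulli m)"
      using bpoly_add[of n 1 0] by (simp add: bpoly_0)
    have e3: "A ^ n * (1 / A) ^ (n - m) = A ^ m" if "m \<le> n" for m
    proof -
      have "A ^ n = A ^ m * A ^ (n - m)" using that by (simp add: power_add[symmetric])
      then show ?thesis using A by (simp add: power_one_over)
    qed
    have "A ^ n * (\<Sum>r<a. bpoly n (real (Suc r) / A))
        = (\<Sum>m\<le>n. real (n choose m) * (A ^ m * (\<Sum>r<a. bpoly m (real r / A))))"
    proof -
      have "A ^ n * (\<Sum>r<a. bpoly n (real (Suc r) / A))
          = (\<Sum>r<a. \<Sum>m\<le>n. real (n choose m) * (A ^ n * (1 / A) ^ (n - m)) * bpoly m (real r / A))"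
        unfolding e1 by (simp add: sum_distrib_left algebra_simps)
      also have "\<dots> = (\<Sum>m\<le>n. \<Sum>r<a. real (n choose m) * A ^ m * bpoly m (real r / A))"
        by (subst sum.swap) (simp add: e3)
      finally show ?thesis by (simp add: sum_distrib_left algebra_simps)
    qed
    then show ?thesis unfolding X_def e2 R_def A_def
      by (simp add: sum_distrib_left sum_subtractf algebra_simps)
  qed
  then have "(\<Sum>m<Suc n. real (n choose m) * R m) = R n"
    using X1 by (simp add: lessThan_Suc_atMost)
  then show ?thesis by simp
qed

lemma raabe:
  fixes a :: nat
  assumes a: "a > 0"
  shows "real a ^ n * (\<Sum>r<a. bpoly n (real r / real a)) = real a * bernoulli n"
proof -
  define R where "R = (\<lambda>m. real a ^ m * (\<Sum>r<a. bpoly m (real r / real a)) - real a * bernoulli m)"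
  have "R n = 0"
  proof (induction n rule: less_induct)
    case (less n)
    have "(\<Sum>m<Suc n. real (Suc n choose m) * R m) = 0"
      using raabe_aux[OF a, of "Suc n"] unfolding R_def by simp
    moreover have "(\<Sum>m<n. real (Suc n choose m) * R m) = 0"
      using less by simp
    ultimately have "real (Suc n) * R n = 0" by simp
    then show ?case by simp
  qed
  then show ?thesis unfolding R_def by simp
qed

definition Tf :: "nat \<Rightarrow> nat \<Rightarrow> real \<Rightarrow> real" where
  "Tf a \<mu> x = 1 / real (\<mu> + 1) * (\<Sum>\<kappa>=0..\<mu>. real (\<mu> + 1 choose \<kappa>) * bernoulli \<kappa>
      * real a powi (int \<kappa> - 1) * x ^ (\<mu> + 1 - \<kappa>))"

lemma Tf_bpoly:
  assumes a: "a > 0"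
  shows "Tf a \<mu> x = real a ^ \<mu> / real (\<mu> + 1) * (bpoly (\<mu> + 1) (x / real a) - bernoulli (\<mu> + 1))"
proof -
  have A: "real a \<noteq> 0" using a by simp
  have bf: "bpoly (\<mu> + 1) (x / real a) - bernoulli (\<mu> + 1)
      = (\<Sum>\<kappa>\<le>\<mu>. real (\<mu> + 1 choose \<kappa>) * bernoulli \<kappa> * (x / real a) ^ (\<mu> + 1 - \<kappa>))"
    unfolding bpoly_def by (simp add: atMost_Suc)
  have pt: "real a ^ \<mu> * (real (\<mu> + 1 choose \<kappa>) * bernoulli \<kappa> * (x / real a) ^ (\<mu> + 1 - \<kappa>))
      = real (\<mu> + 1 choose \<kappa>) * bernoulli \<kappa> * real a powi (int \<kappa> - 1) * x ^ (\<mu> + 1 - \<kappa>)"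
    if "\<kappa> \<le> \<mu>" for \<kappa>
  proof -
    have "real a powi (int \<kappa> - 1) * real a ^ (\<mu> + 1 - \<kappa>) = real a powi (int \<kappa> - 1) * real a powi int (\<mu> + 1 - \<kappa>)"
      by (simp add: power_int_of_nat)
    also have "\<dots> = real a powi (int \<kappa> - 1 + int (\<mu> + 1 - \<kappa>))"
      using A by (simp add: power_int_add)
    also have "int \<kappa> - 1 + int (\<mu> + 1 - \<kappa>) = int \<mu>" using that by simp
    finally have "real a powi (int \<kappa> - 1) * real a ^ (\<mu> + 1 - \<kappa>) = real a ^ \<mu>"
      by (simp add: power_int_of_nat)
    then show ?thesis using A
      by (simp add: power_divide field_simps)
  qed
  have S: "(\<Sum>\<kappa>\<le>\<mu>. real (\<mu> + 1 choose \<kappa>) * bernoulli \<kappa> * real a powi (int \<kappa> - 1) * x ^ (\<mu> + 1 - \<kappa>))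
     = (\<Sum>\<kappa>\<le>\<mu>. real a ^ \<mu> * (real (\<mu> + 1 choose \<kappa>) * bernoulli \<kappa> * (x / real a) ^ (\<mu> + 1 - \<kappa>)))"
  proof (rule sum.cong[OF refl])
    fix \<kappa> assume "\<kappa> \<in> {..\<mu>}"
    then have "\<kappa> \<le> \<mu>" by simp
    then show "real (\<mu> + 1 choose \<kappa>) * bernoulli \<kappa> * real a powi (int \<kappa> - 1) * x ^ (\<mu> + 1 - \<kappa>)
      = real a ^ \<mu> * (real (\<mu> + 1 choose \<kappa>) * bernoulli \<kappa> * (x / real a) ^ (\<mu> + 1 - \<kappa>))"
      by (rule pt[symmetric])
  qed
  show ?thesis
    unfolding Tf_def atLeast0AtMost S bf sum_distrib_left[symmetric] by simp
qed

lemma Tf_diff: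
  assumes a: "a > 0"
  shows "Tf a \<mu> (x + real a) - Tf a \<mu> x = x ^ \<mu>"
proof -
  have A: "real a \<noteq> 0" using a by simp
  have "(x + real a) / real a = x / real a + 1" using A by (simp add: field_simps)
  then have "Tf a \<mu> (x + real a) - Tf a \<mu> x
      = real a ^ \<mu> / real (\<mu> + 1) * (bpoly (\<mu> + 1) (x / real a + 1) - bpoly (\<mu> + 1) (x / real a))"
    unfolding Tf_bpoly[OF a] by (simp add: algebra_simps)
  also have "\<dots> = real a ^ \<mu> * (x / real a) ^ \<mu>"
    unfolding bpoly_diff by simp
  also have "\<dots> = x ^ \<mu>" using A by (simp add: power_divide)
  finally show ?thesis .
qed

lemma Tf_sum_res:
  assumes a: "a > 0"
  shows "(\<Sum>r<a. Tf a \<mu> (real r)) = - bernoulli (\<mu> + 1) / real (\<mu> + 1) * (real a ^ (\<mu> + 1) - 1)"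
proof -
  have A: "real a \<noteq> 0" using a by simp
  have r: "real a ^ \<mu> * (\<Sum>r<a. bpoly (\<mu> + 1) (real r / real a)) = bernoulli (\<mu> + 1)"
    using raabe[OF a, of "\<mu> + 1"] A by simp
  have "(\<Sum>r<a. Tf a \<mu> (real r)) = real a ^ \<mu> / real (\<mu> + 1) *
      ((\<Sum>r<a. bpoly (\<mu> + 1) (real r / real a)) - real a * bernoulli (\<mu> + 1))"
    unfolding Tf_bpoly[OF a] sum_distrib_left[symmetric] by (simp add: sum_subtractf)
  also have "\<dots> = (real a ^ \<mu> * (\<Sum>r<a. bpoly (\<mu> + 1) (real r / real a)) - real a ^ (\<mu> + 1) * bernoulli (\<mu> + 1)) / real (\<mu> + 1)"
    by (simp add: diff_divide_distrib right_diff_distrib mult_ac)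
  also have "\<dots> = - bernoulli (\<mu> + 1) / real (\<mu> + 1) * (real a ^ (\<mu> + 1) - 1)"
    unfolding r by (simp add: diff_divide_distrib add_divide_distrib right_diff_distrib mult_ac)
  finally show ?thesis .
qed

lemma Tf_tel:
  assumes a: "a > 0"
  shows "(\<Sum>i<q. (x + real i * real a) ^ \<mu>) = Tf a \<mu> (x + real q * real a) - Tf a \<mu> x"
proof (induction q)
  case 0 then show ?case by simp
next
  case (Suc q)
  have "Tf a \<mu> (x + real q * real a + real a) - Tf a \<mu> (x + real q * real a) = (x + real q * real a) ^ \<mu>"
    by (rule Tf_diff[OF a])
  then show ?case using Suc by (simp add: algebra_simps)
qed



lemma rep3: "representable [a, b, c] n \<longleftrightarrow> (\<exists>x y z. n = x * a + y * b + z * c)"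
proof
  assume "representable [a, b, c] n"
  then obtain cl :: "nat list" where "length cl = length [a, b, c]"
      "n = (\<Sum>i<length [a, b, c]. cl ! i * [a, b, c] ! i)"
    unfolding representable_def by blast
  then have "n = cl ! 0 * a + cl ! Suc 0 * b + cl ! Suc (Suc 0) * c"
    by (simp add: lessThan_Suc)
  then show "\<exists>x y z. n = x * a + y * b + z * c" by blast
next
  assume "\<exists>x y z. n = x * a + y * b + z * c"
  then obtain x y z where "n = x * a + y * b + z * c" by blast
  then have "length [x, y, z] = length [a, b, c] \<and>
      n = (\<Sum>i<length [a, b, c]. [x, y, z] ! i * [a, b, c] ! i)"
    by (simp add: numeral_3_eq_3 lessThan_Suc)
  then show "representable [a, b, c] n" unfolding representable_def by blast
qed

locale tri =
  fixes a b c d h :: nat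
  assumes d_pos: "d > 0" and h_pos: "h > 0" and cop: "coprime a d"
    and bdef: "b + d = h * a" and cdef: "c = h * a + d" and b_gt: "b > 1"
begin

lemma a_pos: "a > 0"
  using bdef b_gt by (cases a) auto

lemma b_int: "int b = int h * int a - int d"
proof -
  have "int (b + d) = int (h * a)" using bdef by (rule arg_cong)
  then show ?thesis by simp
qed

lemma c_int: "int c = int h * int a + int d"
  using cdef by simp

definition mk :: "nat \<Rightarrow> nat" where
  "mk k = min (k * c) ((a - k) * b)"

lemma sign_int: "int k * int c - int (a - k) * int b = int a * (2 * int h * int k - int b)"
  if "k \<le> a" for k
  using that by (simp add: b_int c_int of_nat_diff algebra_simps)

lemma kc_le_iff: "k \<le> a \<Longrightarrow> k * c \<le> (a - k) * b \<longleftrightarrow> 2 * h * k \<le> b"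
proof -
  assume k: "k \<le> a"
  have "k * c \<le> (a - k) * b \<longleftrightarrow> int k * int c - int (a - k) * int b \<le> 0"
    by (simp only: of_nat_mult[symmetric] of_nat_le_iff[symmetric]) linarith
  also have "\<dots> \<longleftrightarrow> int a * (2 * int h * int k - int b) \<le> 0" using sign_int[OF k] by simp
  also have "\<dots> \<longleftrightarrow> 2 * int h * int k - int b \<le> 0"
    using a_pos by (simp add: mult_le_0_iff)
  also have "\<dots> \<longleftrightarrow> 2 * h * k \<le> b"
  proof -
    have "int (2 * h * k) = 2 * int h * int k" by simp
    then show ?thesis by linarith
  qed
  finally show ?thesis .
qed

lemma kc_ge_iff: "k \<le> a \<Longrightarrow> (a - k) * b \<le> k * c \<longleftrightarrow> b \<le> 2 * h * k"
proof -
  assume k: "k \<le> a"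
  have "(a - k) * b \<le> k * c \<longleftrightarrow> 0 \<le> int k * int c - int (a - k) * int b"
    by (simp only: of_nat_mult[symmetric] of_nat_le_iff[symmetric]) linarith
  also have "\<dots> \<longleftrightarrow> 0 \<le> int a * (2 * int h * int k - int b)" using sign_int[OF k] by simp
  also have "\<dots> \<longleftrightarrow> 0 \<le> 2 * int h * int k - int b"
    using a_pos by (simp add: zero_le_mult_iff)
  also have "\<dots> \<longleftrightarrow> b \<le> 2 * h * k"
  proof -
    have "int (2 * h * k) = 2 * int h * int k" by simp
    then show ?thesis by linarith
  qed
  finally show ?thesis .
qed

lemma mk_mod: "k < a \<Longrightarrow> mk k mod a = (k * d) mod a"
proof -
  assume k: "k < a"
  have 1: "(k * c) mod a = (k * d) mod a"
    unfolding cdef by (simp add: algebra_simps)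
  have "int ((a - k) * b) = int (k * d) + int a * (int h * int (a - k) - int d)"
    using k by (simp add: b_int of_nat_diff algebra_simps)
  then have "int ((a - k) * b) mod int a = int (k * d) mod int a"
    by (metis mod_mult_self2 mult.commute)
  then have 2: "((a - k) * b) mod a = (k * d) mod a"
    by (metis of_nat_eq_iff zmod_int)
  show ?thesis unfolding mk_def using 1 2 by (simp add: min_def)
qed

lemma phi_inj: "inj_on (\<lambda>k. (k * d) mod a) {..<a}"
proof (rule inj_onI)
  fix k1 k2 assume k1: "k1 \<in> {..<a}" and k2: "k2 \<in> {..<a}"
    and e: "(k1 * d) mod a = (k2 * d) mod a"
  have "int (k1 * d) mod int a = int (k2 * d) mod int a"
    using e by (metis zmod_int)
  then have "int a dvd int k1 * int d - int k2 * int d"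
    by (simp add: mod_eq_dvd_iff)
  then have "int a dvd (int k1 - int k2) * int d" by (simp add: algebra_simps)
  moreover have "coprime (int a) (int d)" using cop by simp
  ultimately have dv: "int a dvd (int k1 - int k2)"
    using coprime_dvd_mult_left_iff by blast
  have lt: "\<bar>int k1 - int k2\<bar> < int a" using k1 k2 by auto
  have "int k1 - int k2 = 0"
  proof (rule ccontr)
    assume "int k1 - int k2 \<noteq> 0"
    then have "\<bar>int a\<bar> \<le> \<bar>int k1 - int k2\<bar>" using dv dvd_imp_le_int by blast
    then show False using lt by simp
  qed
  then show "k1 = k2" by simp
qed

lemma phi_bij: "bij_betw (\<lambda>k. (k * d) mod a) {..<a} {..<a}"
proof -
  have "(\<lambda>k. (k * d) mod a) ` {..<a} \<subseteq> {..<a}" using a_pos by auto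
  then have "(\<lambda>k. (k * d) mod a) ` {..<a} = {..<a}"
    using endo_inj_surj[OF _ _ phi_inj] by simp
  then show ?thesis using phi_inj by (simp add: bij_betw_def)
qed

lemma class_exists: "\<exists>k<a. n mod a = (k * d) mod a"
proof -
  have "n mod a \<in> {..<a}" using a_pos by simp
  then have "n mod a \<in> (\<lambda>k. (k * d) mod a) ` {..<a}"
    using phi_bij by (simp add: bij_betw_def)
  then show ?thesis by auto
qed

lemma class_unique: "k1 < a \<Longrightarrow> k2 < a \<Longrightarrow> (k1 * d) mod a = (k2 * d) mod a \<Longrightarrow> k1 = k2"
  using phi_inj by (auto dest: inj_onD)

lemma mk_rep: "k < a \<Longrightarrow> \<exists>x y z. mk k = x * a + y * b + z * c"
proof -
  have 1: "k * c = 0 * a + 0 * b + k * c" by simp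
  have 2: "(a - k) * b = 0 * a + (a - k) * b + 0 * c" by simp
  show ?thesis unfolding mk_def min_def using 1 2 by (cases "k * c \<le> (a - k) * b") (simp_all only: if_True if_False; blast)+
qed

lemma lower:
  assumes k: "k < a" and n: "n = x * a + y * b + z * c" and cl: "n mod a = (k * d) mod a"
  shows "mk k \<le> n"
proof -
  define t where "t = int z - int y"
  have val: "int (y * b + z * c) = int h * int a * (int y + int z) + int d * t"
    unfolding t_def by (simp add: b_int c_int algebra_simps)
  have "int n mod int a = int (k * d) mod int a" using cl by (metis zmod_int)
  then have "int a dvd int n - int k * int d" by (simp add: mod_eq_dvd_iff)
  moreover have "int n = int a * (int x + int h * (int y + int z)) + int d * t"
    using n val by (simp add: algebra_simps)
  ultimately have "int a dvd int a * (int x + int h * (int y + int z)) + (t - int k) * int d"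
    by (simp add: algebra_simps)
  then have "int a dvd (t - int k) * int d"
    by (simp add: dvd_add_right_iff)
  moreover have "coprime (int a) (int d)" using cop by simp
  ultimately have "int a dvd (t - int k)"
    using coprime_dvd_mult_left_iff by blast
  then obtain j where j: "t - int k = int a * j" by (auto elim: dvdE)
  have "int (mk k) \<le> int (y * b + z * c)"
  proof (cases "j \<ge> 0")
    case True
    then have "int a * j \<ge> 0" by simp
    then have tk: "t \<ge> int k" using j by linarith
    have "int (y * b + z * c) = 2 * int h * int a * int y + t * int c"
      unfolding t_def by (simp add: b_int c_int algebra_simps)
    also have "\<dots> \<ge> t * int c" by simp
    finally have "int (y * b + z * c) \<ge> t * int c" .
    moreover have "t * int c \<ge> int k * int c" using tk by (simp add: mult_right_mono)
    moreover have "int (mk k) \<le> int k * int c"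
    proof -
      have "mk k \<le> k * c" unfolding mk_def by simp
      then show ?thesis by (metis of_nat_le_iff of_nat_mult)
    qed
    ultimately show ?thesis by linarith
  next
    case False
    then have "j \<le> -1" by simp
    then have "int a * j \<le> int a * (-1)" by (intro mult_left_mono) auto
    then have "int a * j \<le> - int a" by simp
    then have tk: "- t \<ge> int a - int k" using j by simp
    have "int (y * b + z * c) = 2 * int h * int a * int z + (- t) * int b"
      unfolding t_def by (simp add: b_int c_int algebra_simps)
    also have "\<dots> \<ge> (- t) * int b" by simp
    finally have "int (y * b + z * c) \<ge> (- t) * int b" .
    moreover have "(- t) * int b \<ge> (int a - int k) * int b" using tk by (intro mult_right_mono) auto
    moreover have "int (mk k) \<le> (int a - int k) * int b"
    proof -
      have "mk k \<le> (a - k) * b" unfolding mk_def by simp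
      then have "int (mk k) \<le> int (a - k) * int b" by (metis of_nat_le_iff of_nat_mult)
      then show ?thesis using k by (simp add: of_nat_diff)
    qed
    ultimately show ?thesis by linarith
  qed
  then have "mk k \<le> y * b + z * c" by (simp only: of_nat_le_iff)
  then show ?thesis using n by linarith
qed

lemma rep_iff:
  assumes k: "k < a" and cl: "n mod a = (k * d) mod a"
  shows "representable [a, b, c] n \<longleftrightarrow> mk k \<le> n"
proof
  assume "representable [a, b, c] n"
  then obtain x y z where "n = x * a + y * b + z * c" unfolding rep3 by blast
  then show "mk k \<le> n" using lower[OF k _ cl] by blast
next
  assume le: "mk k \<le> n"
  have "n mod a = mk k mod a" using cl mk_mod[OF k] by simp
  then have "a dvd n - mk k" using le by (simp add: mod_eq_dvd_iff_nat)
  then obtain j where j: "n - mk k = a * j" by (auto elim: dvdE)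
  obtain x y z where m: "mk k = x * a + y * b + z * c" using mk_rep[OF k] by blast
  have "n = (x + j) * a + y * b + z * c" using j m le by (simp add: algebra_simps)
  then show "representable [a, b, c] n" unfolding rep3 by blast
qed

definition NK :: "nat \<Rightarrow> nat set" where
  "NK k = {n. n mod a = (k * d) mod a \<and> n < mk k}"

lemma NR_eq: "NR [a, b, c] = (\<Union>k\<in>{..<a}. NK k)"
proof (rule set_eqI)
  fix n
  obtain k where k: "k < a" "n mod a = (k * d) mod a" using class_exists by blast
  have "n \<in> NR [a, b, c] \<longleftrightarrow> \<not> mk k \<le> n"
    unfolding NR_def using rep_iff[OF k] by simp
  also have "\<dots> \<longleftrightarrow> n \<in> NK k"
    unfolding NK_def using k by auto
  also have "\<dots> \<longleftrightarrow> n \<in> (\<Union>k\<in>{..<a}. NK k)"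
  proof
    assume "n \<in> NK k" then show "n \<in> (\<Union>k\<in>{..<a}. NK k)" using k by blast
  next
    assume "n \<in> (\<Union>k\<in>{..<a}. NK k)"
    then obtain k' where k': "k' < a" "n \<in> NK k'" by blast
    then have "(k' * d) mod a = (k * d) mod a" using k unfolding NK_def by simp
    then have "k' = k" using class_unique k k' by blast
    then show "n \<in> NK k" using k' by simp
  qed
  finally show "n \<in> NR [a, b, c] \<longleftrightarrow> n \<in> (\<Union>k\<in>{..<a}. NK k)" .
qed

lemma NK_eq: "k < a \<Longrightarrow> NK k = (\<lambda>i. mk k mod a + i * a) ` {..<mk k div a}"
proof -
  assume k: "k < a"
  define m where "m = mk k"
  have "n mod a = m mod a \<and> n < m \<longleftrightarrow> (\<exists>i<m div a. n = m mod a + i * a)" for n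
  proof
    assume H: "n mod a = m mod a \<and> n < m"
    have "n div a \<le> m div a" using H by (simp add: div_le_mono)
    moreover have "n div a \<noteq> m div a"
    proof
      assume "n div a = m div a"
      then have "n = m" using H by (metis div_mult_mod_eq)
      then show False using H by simp
    qed
    ultimately have "n div a < m div a" by simp
    moreover have "n = m mod a + n div a * a" using H by (metis mod_div_mult_eq)
    ultimately show "\<exists>i<m div a. n = m mod a + i * a" by blast
  next
    assume "\<exists>i<m div a. n = m mod a + i * a"
    then obtain i where i: "i < m div a" "n = m mod a + i * a" by blast
    have "n mod a = m mod a" using i by simp
    moreover have "i * a < (m div a) * a" using i a_pos by simp
    then have "n < m" using i by (metis add_less_cancel_left mod_div_mult_eq)
    ultimately show "n mod a = m mod a \<and> n < m" by blast
  qed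
  then show ?thesis unfolding NK_def m_def[symmetric] using mk_mod[OF k] m_def by auto
qed

lemma sum_NR: "(\<Sum>n\<in>NR [a, b, c]. f n) = (\<Sum>k<a. \<Sum>i<mk k div a. f (mk k mod a + i * a))"
proof -
  have fin: "finite (NK k)" if "k < a" for k
    unfolding NK_eq[OF that] by (rule finite_imageI) simp
  have "(\<Sum>n\<in>NR [a, b, c]. f n) = (\<Sum>k<a. \<Sum>n\<in>NK k. f n)"
    unfolding NR_eq
  proof (rule sum.UNION_disjoint)
    show "finite {..<a}" by simp
    show "\<forall>i\<in>{..<a}. finite (NK i)" using fin by simp
    show "\<forall>i\<in>{..<a}. \<forall>j\<in>{..<a}. i \<noteq> j \<longrightarrow> NK i \<inter> NK j = {}"
    proof (intro ballI impI)
      fix i j assume i: "i \<in> {..<a}" and j: "j \<in> {..<a}" and ij: "i \<noteq> j"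
      show "NK i \<inter> NK j = {}"
      proof (rule ccontr)
        assume "NK i \<inter> NK j \<noteq> {}"
        then obtain n where "n \<in> NK i" "n \<in> NK j" by blast
        then have "(i * d) mod a = (j * d) mod a" unfolding NK_def by simp
        then have "i = j" using class_unique[of i j] i j by blast
        then show False using ij by blast
      qed
    qed
  qed
  also have "\<dots> = (\<Sum>k<a. \<Sum>i<mk k div a. f (mk k mod a + i * a))"
  proof (rule sum.cong[OF refl])
    fix k assume "k \<in> {..<a}"
    then have k: "k < a" by simp
    have inj: "inj_on (\<lambda>i. mk k mod a + i * a) {..<mk k div a}"
    proof (rule inj_onI)
      fix i j assume "mk k mod a + i * a = mk k mod a + j * a"
      then have "i * a = j * a" by simp
      then show "i = j" using a_pos by simp
    qed
    have "sum f ((\<lambda>i. mk k mod a + i * a) ` {..<mk k div a})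
       = sum (f \<circ> (\<lambda>i. mk k mod a + i * a)) {..<mk k div a}"
      by (rule sum.reindex[OF inj])
    then show "(\<Sum>n\<in>NK k. f n) = (\<Sum>i<mk k div a. f (mk k mod a + i * a))"
      unfolding NK_eq[OF k] by (simp add: comp_def)
  qed
  finally show ?thesis .
qed

lemma powsum_Tf: "real (\<Sum>n\<in>NR [a, b, c]. n ^ \<mu>)
   = (\<Sum>k<a. Tf a \<mu> (real (mk k))) + bernoulli (\<mu> + 1) / real (\<mu> + 1) * (real a ^ (\<mu> + 1) - 1)"
proof -
  have "real (\<Sum>n\<in>NR [a, b, c]. n ^ \<mu>) = (\<Sum>n\<in>NR [a, b, c]. real n ^ \<mu>)" by simp
  also have "\<dots> = (\<Sum>k<a. \<Sum>i<mk k div a. real (mk k mod a + i * a) ^ \<mu>)"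
    by (rule sum_NR)
  also have "\<dots> = (\<Sum>k<a. Tf a \<mu> (real (mk k)) - Tf a \<mu> (real (mk k mod a)))"
  proof (rule sum.cong[OF refl])
    fix k
    have "(\<Sum>i<mk k div a. real (mk k mod a + i * a) ^ \<mu>)
        = (\<Sum>i<mk k div a. (real (mk k mod a) + real i * real a) ^ \<mu>)" by simp
    also have "\<dots> = Tf a \<mu> (real (mk k mod a) + real (mk k div a) * real a) - Tf a \<mu> (real (mk k mod a))"
      by (rule Tf_tel[OF a_pos])
    also have "real (mk k mod a) + real (mk k div a) * real a = real (mk k)"
      by (metis mod_div_mult_eq of_nat_add of_nat_mult)
    finally show "(\<Sum>i<mk k div a. real (mk k mod a + i * a) ^ \<mu>)
        = Tf a \<mu> (real (mk k)) - Tf a \<mu> (real (mk k mod a))" .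
  qed
  also have "\<dots> = (\<Sum>k<a. Tf a \<mu> (real (mk k))) - (\<Sum>k<a. Tf a \<mu> (real (mk k mod a)))"
    by (rule sum_subtractf)
  also have "(\<Sum>k<a. Tf a \<mu> (real (mk k mod a))) = (\<Sum>k<a. Tf a \<mu> (real ((k * d) mod a)))"
    by (rule sum.cong) (auto simp: mk_mod)
  also have "\<dots> = (\<Sum>r<a. Tf a \<mu> (real r))"
    using sum.reindex_bij_betw[OF phi_bij, of "\<lambda>r. Tf a \<mu> (real r)"] by simp
  also have "\<dots> = - bernoulli (\<mu> + 1) / real (\<mu> + 1) * (real a ^ (\<mu> + 1) - 1)"
    by (rule Tf_sum_res[OF a_pos])
  finally show ?thesis by simp
qed

end


lemma bernoulli_Suc0: "bernoulli (Suc 0) = - 1 / 2"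
  using bernoulli_1 by simp

lemma gauss0: "(\<Sum>r=0..n. real r) = real n * (real n + 1) / 2"
  by (induction n) (simp_all add: field_simps)

lemma gauss1: "(\<Sum>r=1..n. real r) = real n * (real n + 1) / 2"
  by (induction n) (simp_all add: field_simps)

lemma sq0: "(\<Sum>r=0..n. real r ^ 2) = real n * (real n + 1) * (2 * real n + 1) / 6"
  by (induction n) (simp_all add: field_simps power2_eq_square)

lemma sq1: "(\<Sum>r=1..n. real r ^ 2) = real n * (real n + 1) * (2 * real n + 1) / 6"
  by (induction n) (simp_all add: field_simps power2_eq_square)

lemma Tf_sum_scaled:
  "(\<Sum>k\<in>K. Tf a \<mu> (real k * g)) = 1 / real (\<mu> + 1) * (\<Sum>\<kappa>=0..\<mu>. real (\<mu> + 1 choose \<kappa>) * bernoulli \<kappa>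
      * real a powi (int \<kappa> - 1) * (g ^ (\<mu> + 1 - \<kappa>) * (\<Sum>k\<in>K. real k ^ (\<mu> + 1 - \<kappa>))))"
proof -
  have "(\<Sum>k\<in>K. Tf a \<mu> (real k * g)) = 1 / real (\<mu> + 1) * (\<Sum>k\<in>K. \<Sum>\<kappa>=0..\<mu>. real (\<mu> + 1 choose \<kappa>) * bernoulli \<kappa>
      * real a powi (int \<kappa> - 1) * (real k * g) ^ (\<mu> + 1 - \<kappa>))"
    unfolding Tf_def by (simp add: sum_distrib_left)
  also have "(\<Sum>k\<in>K. \<Sum>\<kappa>=0..\<mu>. real (\<mu> + 1 choose \<kappa>) * bernoulli \<kappa>
      * real a powi (int \<kappa> - 1) * (real k * g) ^ (\<mu> + 1 - \<kappa>))
    = (\<Sum>\<kappa>=0..\<mu>. \<Sum>k\<in>K. real (\<mu> + 1 choose \<kappa>) * bernoulli \<kappa>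
      * real a powi (int \<kappa> - 1) * (real k * g) ^ (\<mu> + 1 - \<kappa>))"
    by (rule sum.swap)
  also have "\<dots> = (\<Sum>\<kappa>=0..\<mu>. real (\<mu> + 1 choose \<kappa>) * bernoulli \<kappa>
      * real a powi (int \<kappa> - 1) * (g ^ (\<mu> + 1 - \<kappa>) * (\<Sum>k\<in>K. real k ^ (\<mu> + 1 - \<kappa>))))"
    by (simp add: sum_distrib_left power_mult_distrib mult_ac)
  finally show ?thesis .
qed

context tri
begin

definition s :: nat where "s = b div (2 * h)"

lemma le_s_iff: "k \<le> s \<longleftrightarrow> 2 * h * k \<le> b"
  unfolding s_def using h_pos less_eq_div_iff_mult_less_eq[of "2 * h" k b]
  by (simp add: mult.commute)

lemma s_lt: "s < a"
proof -
  have "2 * h * s \<le> b" using le_s_iff[of s] by simp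
  moreover have "b < h * a" using bdef d_pos by linarith
  moreover have "h * (2 * s) = 2 * h * s" by (simp only: mult_ac)
  ultimately have "h * (2 * s) < h * a" by linarith
  then have "2 * s < a" using mult_less_cancel1 by blast
  then show ?thesis by simp
qed

lemma mk_low: "k \<le> s \<Longrightarrow> mk k = k * c"
  using kc_le_iff[of k] le_s_iff[of k] s_lt unfolding mk_def by simp

lemma mk_high: "s < k \<Longrightarrow> k < a \<Longrightarrow> mk k = (a - k) * b"
  using kc_ge_iff[of k] le_s_iff[of k] unfolding mk_def by (simp add: min_def)

lemma sum_mk: "(\<Sum>k<a. f (mk k)) = (\<Sum>k=0..s. f (k * c)) + (\<Sum>r=Suc 0..a - s - 1. f (r * b))"
proof -
  have "(\<Sum>k<a. f (mk k)) = (\<Sum>k=0..<Suc s. f (mk k)) + (\<Sum>k=Suc s..<a. f (mk k))"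
    unfolding lessThan_atLeast0 by (rule sum.atLeastLessThan_concat[symmetric]) (use s_lt in auto)
  also have "(\<Sum>k=0..<Suc s. f (mk k)) = (\<Sum>k=0..s. f (k * c))"
    by (rule sum.cong) (auto simp: mk_low)
  also have "(\<Sum>k=Suc s..<a. f (mk k)) = (\<Sum>k=Suc s..<a. f ((a - k) * b))"
    by (rule sum.cong) (auto simp: mk_high)
  also have "\<dots> = (\<Sum>r=Suc 0..a - s - 1. f (r * b))"
    by (rule sum.reindex_bij_witness[where i="\<lambda>r. a - r" and j="\<lambda>k. a - k"]) auto
  finally show ?thesis .
qed

lemma powsum_main:
  "real (\<Sum>n\<in>NR [a, b, c]. n ^ \<mu>) =
     1 / real (\<mu> + 1) * (\<Sum>\<kappa>=0..\<mu>. real (\<mu> + 1 choose \<kappa>) * bernoulli \<kappa>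
              * real a powi (int \<kappa> - 1)
              * (real c ^ (\<mu> + 1 - \<kappa>) * (\<Sum>r=0..s. real r ^ (\<mu> + 1 - \<kappa>))
                 + real b ^ (\<mu> + 1 - \<kappa>) * (\<Sum>r=1..a - s - 1. real r ^ (\<mu> + 1 - \<kappa>))))
           + bernoulli (\<mu> + 1) / real (\<mu> + 1) * (real a ^ (\<mu> + 1) - 1)"
proof -
  have "(\<Sum>k<a. Tf a \<mu> (real (mk k))) = (\<Sum>k=0..s. Tf a \<mu> (real k * real c)) + (\<Sum>r=Suc 0..a - s - 1. Tf a \<mu> (real r * real b))"
    using sum_mk[of "\<lambda>x. Tf a \<mu> (real x)"] by simp
  also have "\<dots> = 1 / real (\<mu> + 1) * (\<Sum>\<kappa>=0..\<mu>. real (\<mu> + 1 choose \<kappa>) * bernoulli \<kappa>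
              * real a powi (int \<kappa> - 1)
              * (real c ^ (\<mu> + 1 - \<kappa>) * (\<Sum>r=0..s. real r ^ (\<mu> + 1 - \<kappa>))
                 + real b ^ (\<mu> + 1 - \<kappa>) * (\<Sum>r=1..a - s - 1. real r ^ (\<mu> + 1 - \<kappa>))))"
    unfolding Tf_sum_scaled distrib_left[symmetric] sum.distrib[symmetric] by simp
  finally show ?thesis using powsum_Tf[of \<mu>] by simp
qed

definition G :: nat where "G = Max (mk ` {..<a})"

lemma G_props: "\<exists>k0<a. G = mk k0" "\<And>k. k < a \<Longrightarrow> mk k \<le> G"
proof -
  have fin: "finite (mk ` {..<a})" by simp
  have ne: "mk ` {..<a} \<noteq> {}" using a_pos by auto
  have "G \<in> mk ` {..<a}" unfolding G_def using Max_in[OF fin ne] .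
  then show "\<exists>k0<a. G = mk k0" by auto
  show "\<And>k. k < a \<Longrightarrow> mk k \<le> G" unfolding G_def using fin by (simp add: Max_ge)
qed

lemma NR_fin: "finite (NR [a, b, c])"
  unfolding NR_eq using NK_eq by (simp add: finite_UN)

lemma NK_le: assumes k: "k < a" and n: "n \<in> NK k" shows "n + a \<le> mk k"
proof -
  have n1: "n mod a = mk k mod a" "n < mk k" using n mk_mod[OF k] unfolding NK_def by auto
  then have "a dvd mk k - n" using mod_eq_dvd_iff_nat[of n "mk k" a] by simp
  moreover have "mk k - n > 0" using n1 by simp
  ultimately have "a \<le> mk k - n" by (simp add: dvd_imp_le)
  then show ?thesis using n1 by linarith
qed

lemma frob_G: "frob [a, b, c] = int G - int a"
proof (cases "a \<le> G")
  case True
  obtain k0 where k0: "k0 < a" "G = mk k0" using G_props(1) by blast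
  have "(G - a) mod a = G mod a" using True by (metis le_add_diff_inverse2 mod_add_self2)
  then have "G - a \<in> NK k0" unfolding NK_def using k0 mk_mod[OF k0(1)] True a_pos by auto
  then have mem: "G - a \<in> NR [a, b, c]" unfolding NR_eq using k0 by blast
  have "Max (NR [a, b, c]) = G - a"
  proof (rule Max_eqI[OF NR_fin])
    fix n assume "n \<in> NR [a, b, c]"
    then obtain k where k: "k < a" "n \<in> NK k" unfolding NR_eq by blast
    have "n + a \<le> mk k" by (rule NK_le[OF k])
    moreover have "mk k \<le> G" using G_props(2) k by simp
    ultimately show "n \<le> G - a" by simp
  next
    show "G - a \<in> NR [a, b, c]" by (rule mem)
  qed
  then show ?thesis unfolding frob_def using mem True by auto
next
  case False
  have empty: "NR [a, b, c] = {}"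
  proof (rule ccontr)
    assume "NR [a, b, c] \<noteq> {}"
    then obtain n where "n \<in> NR [a, b, c]" by blast
    then obtain k where k: "k < a" "n \<in> NK k" unfolding NR_eq by blast
    have "n + a \<le> mk k" by (rule NK_le[OF k])
    moreover have "mk k \<le> G" using G_props(2) k by simp
    ultimately show False using False by simp
  qed
  have "a - 1 \<in> (\<lambda>k. (k * d) mod a) ` {..<a}" using phi_bij a_pos by (simp add: bij_betw_def)
  then obtain k where k: "k < a" "(k * d) mod a = a - 1" by auto
  have "mk k \<le> G" using G_props(2) k by simp
  then have "mk k < a" using False by simp
  then have "mk k = a - 1" using mk_mod[OF k(1)] k by simp
  then have "G = a - 1" using \<open>mk k \<le> G\<close> False by simp
  then show ?thesis unfolding frob_def using empty a_pos by simp
qed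

lemma G_val:
  "int G = max (int s * int c) ((int a - \<lceil>real b / real (2 * h)\<rceil>) * int b)"
proof -
  define t where "t = \<lceil>real b / real (2 * h)\<rceil>"
  have hp: "real (2 * h) > 0" using h_pos by simp
  have t1: "real b / real (2 * h) \<le> of_int t" unfolding t_def by simp
  have t2: "of_int t - 1 < real b / real (2 * h)" unfolding t_def by linarith
  have tb1: "int b \<le> t * (2 * int h)"
  proof -
    have "real b \<le> of_int t * real (2 * h)" using t1 hp by (simp add: divide_le_eq)
    then have "real_of_int (int b) \<le> real_of_int (t * (2 * int h))" by simp
    then show ?thesis by (simp only: of_int_le_iff)
  qed
  have tb2: "(t - 1) * (2 * int h) < int b"
  proof -
    have "(of_int t - 1) * real (2 * h) < real b" using t2 hp by (simp add: less_divide_eq)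
    then have "real_of_int ((t - 1) * (2 * int h)) < real_of_int (int b)" by simp
    then show ?thesis by (simp only: of_int_less_iff)
  qed
  define M where "M = max (int s * int c) ((int a - t) * int b)"
  have up: "int (mk k) \<le> M" if k: "k < a" for k
  proof (cases "k \<le> s")
    case True
    then have "int (mk k) = int k * int c" using mk_low by simp
    also have "\<dots> \<le> int s * int c" using True by (simp add: mult_right_mono)
    finally show ?thesis unfolding M_def by simp
  next
    case False
    then have "\<not> 2 * h * k \<le> b" using le_s_iff by simp
    then have "b < 2 * h * k" by simp
    then have "int b < int (2 * h * k)" by (simp only: of_nat_less_iff)
    then have "int b < int k * (2 * int h)" by (simp add: mult_ac)
    with tb2 have "(t - 1) * (2 * int h) < int k * (2 * int h)" by linarith
    then have "t - 1 < int k" using h_pos by (simp add: mult_less_cancel_right)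
    then have tk: "t \<le> int k" by simp
    have "int (mk k) = (int a - int k) * int b" using mk_high[of k] False k by (simp add: of_nat_diff)
    also have "\<dots> \<le> (int a - t) * int b" using tk by (intro mult_right_mono) auto
    finally show ?thesis unfolding M_def by simp
  qed
  have lo1: "int s * int c \<le> int G"
  proof -
    have "mk s = s * c" using mk_low by simp
    then have "s * c \<le> G" using G_props(2)[OF s_lt] by simp
    then show ?thesis by (metis of_nat_le_iff of_nat_mult)
  qed
  have lo2: "(int a - t) * int b \<le> int G"
  proof (cases "t < int a")
    case False
    then have "(int a - t) * int b \<le> 0" by (simp add: mult_nonpos_nonneg)
    then show ?thesis by simp
  next
    case True
    have "t > 0"
    proof (rule ccontr)
      assume "\<not> t > 0"
      then have "t * (2 * int h) \<le> 0" using h_pos by (simp add: mult_nonpos_nonneg)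
      then show False using tb1 b_gt by simp
    qed
    define tn where "tn = nat t"
    have tn: "int tn = t" "tn < a" using True \<open>t > 0\<close> unfolding tn_def by auto
    have "b \<le> 2 * h * tn"
    proof -
      have "int b \<le> int (2 * h * tn)" using tb1 tn by (simp add: mult_ac)
      then show ?thesis by (simp only: of_nat_le_iff)
    qed
    then have "(a - tn) * b \<le> tn * c" using kc_ge_iff[of tn] tn by simp
    then have "mk tn = (a - tn) * b" unfolding mk_def by simp
    then have "(a - tn) * b \<le> G" using G_props(2)[OF tn(2)] by simp
    then have "int ((a - tn) * b) \<le> int G" by (simp only: of_nat_le_iff)
    then show ?thesis using tn by (simp add: of_nat_diff)
  qed
  obtain k0 where k0: "k0 < a" "G = mk k0" using G_props(1) by blast
  have "int G \<le> M" using up[OF k0(1)] k0 by simp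
  moreover have "M \<le> int G" unfolding M_def using lo1 lo2 by simp
  ultimately have "int G = M" by (rule antisym)
  then show ?thesis unfolding M_def t_def .
qed

lemma frob_main:
  "frob [a, b, c] = max (int s * int c - int a) ((int a - \<lceil>real b / real (2 * h)\<rceil>) * int b - int a)"
  unfolding frob_G G_val by (simp add: max_diff_distrib_left)

lemma card_main: "real (card (NR [a, b, c])) = real c / (2 * real a) * real s * (real s + 1)
         + real b / (2 * real a) * (real a - real s) * (real a - real s - 1)
         - (real a - 1) / 2"
proof -
  have A: "real a \<noteq> 0" using a_pos by simp
  have m: "real (a - s - 1) = real a - real s - 1" using s_lt by (simp add: of_nat_diff)
  have "card (NR [a, b, c]) = (\<Sum>n\<in>NR [a, b, c]. n ^ 0)" by simp
  then have "real (card (NR [a, b, c])) = inverse (real a) * (real c * (\<Sum>r=0..s. real r)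
        + real b * (\<Sum>r=1..a - s - 1. real r)) - (real a - 1) / 2"
    using powsum_main[of 0] by (simp add: bernoulli_Suc0 power_int_minus)
  also have "\<dots> = real c / (2 * real a) * real s * (real s + 1)
         + real b / (2 * real a) * (real a - real s) * (real a - real s - 1)
         - (real a - 1) / 2"
    unfolding gauss0 gauss1 m using A by (simp add: field_simps)
  finally show ?thesis .
qed

lemma sum_main: "real (\<Sum>n\<in>NR [a, b, c]. n) =
         (real c ^ 2 * (2 * real s + 1) / (12 * real a) - real c / 4)
            * real s * (real s + 1)
       + (real b ^ 2 * (2 * real a - 2 * real s - 1) / (12 * real a) - real b / 4)
            * (real a - real s) * (real a - real s - 1)
       + (real a ^ 2 - 1) / 12"
proof -
  have A: "real a \<noteq> 0" using a_pos by simp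
  have m: "real (a - s - 1) = real a - real s - 1" using s_lt by (simp add: of_nat_diff)
  have e: "(\<Sum>n\<in>NR [a, b, c]. n) = (\<Sum>n\<in>NR [a, b, c]. n ^ 1)" by simp
  have "{0..Suc 0} = {0, 1::nat}" by auto
  then have "real (\<Sum>n\<in>NR [a, b, c]. n) = 1 / 2 * (inverse (real a) * (real c ^ 2 * (\<Sum>r=0..s. real r ^ 2)
        + real b ^ 2 * (\<Sum>r=1..a - s - 1. real r ^ 2))
        + 2 * (- 1 / 2) * (real c * (\<Sum>r=0..s. real r)
        + real b * (\<Sum>r=1..a - s - 1. real r)))
        + 1 / 6 / 2 * (real a ^ 2 - 1)"
    unfolding e using powsum_main[of 1]
    by (simp add: bernoulli_Suc0 bernoulli_2[simplified numeral_2_eq_2] power_int_minus numeral_2_eq_2)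
  also have "\<dots> = (real c ^ 2 * (2 * real s + 1) / (12 * real a) - real c / 4)
            * real s * (real s + 1)
       + (real b ^ 2 * (2 * real a - 2 * real s - 1) / (12 * real a) - real b / 4)
            * (real a - real s) * (real a - real s - 1)
       + (real a ^ 2 - 1) / 12"
    unfolding gauss0 gauss1 sq0 sq1 m using A by (simp add: field_simps power2_eq_square)
  finally show ?thesis .
qed

end

theorem mainTheorem6:
  fixes a d h :: nat
  assumes "d > 0" and "h > 0" and "gcd a d = 1"
    and "int h * int a - int d > 1"
  defines "A \<equiv> [a, h * a - d, h * a + d]"
    and "s \<equiv> nat \<lfloor>real (h * a - d) / real (2 * h)\<rfloor>"
  shows "frob A = max (\<lfloor>real (h * a - d) / real (2 * h)\<rfloor> * int (h * a + d) - int a)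
                     ((int a - \<lceil>real (h * a - d) / real (2 * h)\<rceil>) * int (h * a - d) - int a)
    \<and> real (sylv A) = real (h * a + d) / (2 * real a) * real s * (real s + 1)
         + real (h * a - d) / (2 * real a) * (real a - real s) * (real a - real s - 1)
         - (real a - 1) / 2
    \<and> real (sumNR A) =
         (real (h * a + d) ^ 2 * (2 * real s + 1) / (12 * real a) - real (h * a + d) / 4)
            * real s * (real s + 1)
       + (real (h * a - d) ^ 2 * (2 * real a - 2 * real s - 1) / (12 * real a) - real (h * a - d) / 4)
            * (real a - real s) * (real a - real s - 1)
       + (real a ^ 2 - 1) / 12
    \<and> (\<forall>\<mu>::nat. \<mu> > 0 \<longrightarrow>
         real (powsumNR \<mu> A) =
           1 / real (\<mu> + 1) * (\<Sum>\<kappa>=0..\<mu>. real (\<mu> + 1 choose \<kappa>) * bernoulli \<kappa>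
              * real a powi (int \<kappa> - 1)
              * (real (h * a + d) ^ (\<mu> + 1 - \<kappa>) * (\<Sum>r=0..s. real r ^ (\<mu> + 1 - \<kappa>))
                 + real (h * a - d) ^ (\<mu> + 1 - \<kappa>) * (\<Sum>r=1..a - s - 1. real r ^ (\<mu> + 1 - \<kappa>))))
           + bernoulli (\<mu> + 1) / real (\<mu> + 1) * (real a ^ (\<mu> + 1) - 1))"
proof -
  have hd: "d + 1 < h * a"
  proof -
    have "int (d + 1) < int (h * a)" using assms(4) by simp
    then show ?thesis by (simp only: of_nat_less_iff)
  qed
  interpret T: tri a "h * a - d" "h * a + d" d h
  proof
    show "0 < d" by (rule assms(1))
    show "0 < h" by (rule assms(2))
    show "coprime a d" using assms(3) by (simp add: coprime_iff_gcd_eq_1)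
    show "h * a - d + d = h * a" using hd by simp
    show "h * a + d = h * a + d" by simp
    show "1 < h * a - d" using hd by simp
  qed
  have fl: "\<lfloor>real (h * a - d) / real (2 * h)\<rfloor> = int T.s"
    unfolding T.s_def by (rule floor_divide_of_nat_eq)
  have s_eq: "s = T.s" unfolding s_def fl by simp
  have P1: "frob A = max (\<lfloor>real (h * a - d) / real (2 * h)\<rfloor> * int (h * a + d) - int a)
                     ((int a - \<lceil>real (h * a - d) / real (2 * h)\<rceil>) * int (h * a - d) - int a)"
    unfolding A_def fl by (rule T.frob_main)
  have P2: "real (sylv A) = real (h * a + d) / (2 * real a) * real s * (real s + 1)
         + real (h * a - d) / (2 * real a) * (real a - real s) * (real a - real s - 1)
         - (real a - 1) / 2"
    unfolding A_def sylv_def s_eq by (rule T.card_main)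
  have P3: "real (sumNR A) =
         (real (h * a + d) ^ 2 * (2 * real s + 1) / (12 * real a) - real (h * a + d) / 4)
            * real s * (real s + 1)
       + (real (h * a - d) ^ 2 * (2 * real a - 2 * real s - 1) / (12 * real a) - real (h * a - d) / 4)
            * (real a - real s) * (real a - real s - 1)
       + (real a ^ 2 - 1) / 12"
    unfolding A_def sumNR_def s_eq by (rule T.sum_main)
  have P4: "\<forall>\<mu>::nat. \<mu> > 0 \<longrightarrow>
         real (powsumNR \<mu> A) =
           1 / real (\<mu> + 1) * (\<Sum>\<kappa>=0..\<mu>. real (\<mu> + 1 choose \<kappa>) * bernoulli \<kappa>
              * real a powi (int \<kappa> - 1)
              * (real (h * a + d) ^ (\<mu> + 1 - \<kappa>) * (\<Sum>r=0..s. real r ^ (\<mu> + 1 - \<kappa>))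
                 + real (h * a - d) ^ (\<mu> + 1 - \<kappa>) * (\<Sum>r=1..a - s - 1. real r ^ (\<mu> + 1 - \<kappa>))))
           + bernoulli (\<mu> + 1) / real (\<mu> + 1) * (real a ^ (\<mu> + 1) - 1)"
    unfolding A_def powsumNR_def s_eq using T.powsum_main by blast
  show ?thesis using P1 P2 P3 P4 by blast
qed

end
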